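(* Let $\mathbf A$ be a residuated semigroup and let $\mathrm{Idp}(\mathbf A)$ be its set of positive idempotents. For $p\in\mathrm{Idp}(\mathbf A)$ put $A_p:=\{a\in A: a\backslash a=p\}$ and ${}_pA:=\{a\in A: a/a=p\}$. The following are equivalent: (1) $\mathbf A$ satisfies $y\le (x/x)y$ and $y\le y(x\backslash x)$ for all $x,y\in A$; (2) every element of the form $a\backslash a$ or $a/a$ ($a\in A$) is positive; (3) $\mathrm{Idp}(\mathbf A)=\{a/a: a\in A\}=\{a\backslash a: a\in A\}$; (4) both families $\{{}_pA: p\in\mathrm{Idp}(\mathbf A)\}$ and $\{A_p: p\in\mathrm{Idp}(\mathbf A)\}$ are partitions of $A$ (i.e. their members cover $A$ and are pairwise disjoint).
   Context: A residuated semigroup is a structure $\langle A,\le,\cdot,\backslash,/\rangle$ where $\langle A,\le\rangle$ is a poset, $\langle A,\cdot\rangle$ is a semigroup (we write $xy$ for $x\cdot y$), and for all $x,y,z$: $xy\le z\iff x\le z/y\iff y\le x\backslash z$. An element $p$ is positive if $a\le pa$ and $a\le ap$ for all $a\in A$; it is idempotent if $pp=p$. *)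

theory Defs
  imports Main
begin

text \<open>A residuated semigroup on the carrier type 'a, given by the order le,
 the multiplication mult, the left division ldiv (x \ y = ldiv x y) and the
 right division rdiv (x / y = rdiv x y).\<close>

definition residuated_semigroup ::
  "('a \<Rightarrow> 'a \<Rightarrow> bool) \<Rightarrow> ('a \<Rightarrow> 'a \<Rightarrow> 'a) \<Rightarrow> ('a \<Rightarrow> 'a \<Rightarrow> 'a) \<Rightarrow> ('a \<Rightarrow> 'a \<Rightarrow> 'a) \<Rightarrow> bool" where
  "residuated_semigroup le mult ldiv rdiv \<longleftrightarrow>
     (\<forall>x. le x x) \<and>
     (\<forall>x y. le x y \<and> le y x \<longrightarrow> x = y) \<and>
     (\<forall>x y z. le x y \<and> le y z \<longrightarrow> le x z) \<and>
     (\<forall>x y z. mult (mult x y) z = mult x (mult y z)) \<and>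
     (\<forall>x y z. (le (mult x y) z \<longleftrightarrow> le x (rdiv z y)) \<and>
              (le (mult x y) z \<longleftrightarrow> le y (ldiv x z)))"

definition positive_el :: "('a \<Rightarrow> 'a \<Rightarrow> bool) \<Rightarrow> ('a \<Rightarrow> 'a \<Rightarrow> 'a) \<Rightarrow> 'a \<Rightarrow> bool" where
  "positive_el le mult p \<longleftrightarrow> (\<forall>a. le a (mult p a) \<and> le a (mult a p))"

definition idempotent_el :: "('a \<Rightarrow> 'a \<Rightarrow> 'a) \<Rightarrow> 'a \<Rightarrow> bool" where
  "idempotent_el mult p \<longleftrightarrow> mult p p = p"

definition Idp :: "('a \<Rightarrow> 'a \<Rightarrow> bool) \<Rightarrow> ('a \<Rightarrow> 'a \<Rightarrow> 'a) \<Rightarrow> 'a set" where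
  "Idp le mult = {p. positive_el le mult p \<and> idempotent_el mult p}"

definition A_sub :: "('a \<Rightarrow> 'a \<Rightarrow> 'a) \<Rightarrow> 'a \<Rightarrow> 'a set" where
  "A_sub ldiv p = {a. ldiv a a = p}"

definition sub_A :: "('a \<Rightarrow> 'a \<Rightarrow> 'a) \<Rightarrow> 'a \<Rightarrow> 'a set" where
  "sub_A rdiv p = {a. rdiv a a = p}"

definition is_partition_family :: "'b set \<Rightarrow> ('b \<Rightarrow> 'a set) \<Rightarrow> bool" where
  "is_partition_family I F \<longleftrightarrow>
     (\<Union>p\<in>I. F p) = UNIV \<and> (\<forall>p\<in>I. \<forall>q\<in>I. p \<noteq> q \<longrightarrow> F p \<inter> F q = {})"

end

theory Submission
  imports Defs
begin

locale rs =
  fixes le :: "'a \<Rightarrow> 'a \<Rightarrow> bool" and mult ldiv rdiv :: "'a \<Rightarrow> 'a \<Rightarrow> 'a"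
  assumes R: "residuated_semigroup le mult ldiv rdiv"
begin

lemma rf: "le x x" using R unfolding residuated_semigroup_def by blast
lemma asym: "le x y \<Longrightarrow> le y x \<Longrightarrow> x = y" using R unfolding residuated_semigroup_def by blast
lemma tr: "le x y \<Longrightarrow> le y z \<Longrightarrow> le x z" using R unfolding residuated_semigroup_def by blast
lemma assoc: "mult (mult x y) z = mult x (mult y z)" using R unfolding residuated_semigroup_def by blast
lemma res1: "le (mult x y) z = le x (rdiv z y)" using R unfolding residuated_semigroup_def by blast
lemma res2: "le (mult x y) z = le y (ldiv x z)" using R unfolding residuated_semigroup_def by blast

lemma monoL: "le x y \<Longrightarrow> le (mult z x) (mult z y)"
  by (meson res2 rf tr)
lemma monoR: "le x y \<Longrightarrow> le (mult x z) (mult y z)"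
  by (meson res1 rf tr)
lemma lc: "le (mult a (ldiv a b)) b" using res2 rf by blast
lemma rc: "le (mult (rdiv b a) a) b" using res1 rf by blast

lemma lidem: "le (mult (ldiv a a) (ldiv a a)) (ldiv a a)"
proof -
  have "le (mult (mult a (ldiv a a)) (ldiv a a)) (mult a (ldiv a a))" using monoR lc by blast
  then have "le (mult (mult a (ldiv a a)) (ldiv a a)) a" using lc tr by blast
  then show ?thesis using res2 assoc by metis
qed

lemma ridem: "le (mult (rdiv a a) (rdiv a a)) (rdiv a a)"
proof -
  have "le (mult (rdiv a a) (mult (rdiv a a) a)) (mult (rdiv a a) a)" using monoL rc by blast
  then have "le (mult (rdiv a a) (mult (rdiv a a) a)) a" using rc tr by blast
  then show ?thesis using res1 assoc by metis
qed

lemma Idp_l: "p \<in> Idp le mult \<Longrightarrow> ldiv p p = p"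
proof -
  assume "p \<in> Idp le mult"
  then have P: "\<And>a. le a (mult p a)" and I: "mult p p = p"
    unfolding Idp_def positive_el_def idempotent_el_def by auto
  have "le p (ldiv p p)" using res2[of p p p] I rf by simp
  moreover have "le (ldiv p p) p" using P[of "ldiv p p"] lc[of p p] tr by blast
  ultimately show ?thesis using asym by blast
qed

lemma Idp_r: "p \<in> Idp le mult \<Longrightarrow> rdiv p p = p"
proof -
  assume "p \<in> Idp le mult"
  then have P: "\<And>a. le a (mult a p)" and I: "mult p p = p"
    unfolding Idp_def positive_el_def idempotent_el_def by auto
  have "le p (rdiv p p)" using res1[of p p p] I rf by simp
  moreover have "le (rdiv p p) p" using P[of "rdiv p p"] rc[of p p] tr by blast
  ultimately show ?thesis using asym by blast
qed

lemma pos_idem_l: "positive_el le mult (ldiv a a) \<Longrightarrow> ldiv a a \<in> Idp le mult"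
  unfolding Idp_def positive_el_def idempotent_el_def
  using lidem asym by blast

lemma pos_idem_r: "positive_el le mult (rdiv a a) \<Longrightarrow> rdiv a a \<in> Idp le mult"
  unfolding Idp_def positive_el_def idempotent_el_def
  using ridem asym by blast

lemma c1c2:
  assumes "\<forall>x y. le y (mult (rdiv x x) y) \<and> le y (mult y (ldiv x x))"
  shows "positive_el le mult (ldiv a a) \<and> positive_el le mult (rdiv a a)"
proof -
  let ?u = "ldiv a a" let ?v = "rdiv a a"
  have u1: "le (rdiv ?u ?u) ?u" using assms rc tr by blast
  have v1: "le (ldiv ?v ?v) ?v" using assms lc tr by blast
  have "le y (mult ?u y)" for y using assms u1 monoR tr by blast
  moreover have "le y (mult y ?v)" for y using assms v1 monoL tr by blast
  ultimately show ?thesis unfolding positive_el_def using assms by blast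
qed

end

theorem lemma3p1:
  fixes le :: "'a \<Rightarrow> 'a \<Rightarrow> bool" and mult ldiv rdiv :: "'a \<Rightarrow> 'a \<Rightarrow> 'a"
  assumes "residuated_semigroup le mult ldiv rdiv"
  defines "C1 \<equiv> (\<forall>x y. le y (mult (rdiv x x) y) \<and> le y (mult y (ldiv x x)))"
      and "C2 \<equiv> (\<forall>a. positive_el le mult (ldiv a a) \<and> positive_el le mult (rdiv a a))"
      and "C3 \<equiv> (Idp le mult = range (\<lambda>a. rdiv a a) \<and> Idp le mult = range (\<lambda>a. ldiv a a))"
      and "C4 \<equiv> (is_partition_family (Idp le mult) (sub_A rdiv) \<and>
                  is_partition_family (Idp le mult) (A_sub ldiv))"
  shows "(C1 \<longleftrightarrow> C2) \<and> (C2 \<longleftrightarrow> C3) \<and> (C3 \<longleftrightarrow> C4)"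
proof -
  interpret rs le mult ldiv rdiv using assms(1) by unfold_locales
  have sub: "Idp le mult \<subseteq> range (\<lambda>a. rdiv a a)" "Idp le mult \<subseteq> range (\<lambda>a. ldiv a a)"
  proof -
    show "Idp le mult \<subseteq> range (\<lambda>a. rdiv a a)"
    proof
      fix p assume "p \<in> Idp le mult"
      then have "p = rdiv p p" using Idp_r by simp
      then show "p \<in> range (\<lambda>a. rdiv a a)" by blast
    qed
    show "Idp le mult \<subseteq> range (\<lambda>a. ldiv a a)"
    proof
      fix p assume "p \<in> Idp le mult"
      then have "p = ldiv p p" using Idp_l by simp
      then show "p \<in> range (\<lambda>a. ldiv a a)" by blast
    qed
  qed
  have 12: "C1 \<longleftrightarrow> C2"
  proof
    assume C1 then show C2 unfolding C1_def C2_def using c1c2 by blast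
  next
    assume C2 then show C1 unfolding C1_def C2_def positive_el_def by blast
  qed
  have 23: "C2 \<longleftrightarrow> C3"
  proof
    assume C2
    then have "rdiv a a \<in> Idp le mult" "ldiv a a \<in> Idp le mult" for a
      unfolding C2_def using pos_idem_l pos_idem_r by blast+
    then show C3 unfolding C3_def using sub by blast
  next
    assume C3
    then have "rdiv a a \<in> Idp le mult" "ldiv a a \<in> Idp le mult" for a
      unfolding C3_def by auto
    then show C2 unfolding C2_def Idp_def by blast
  qed
  have 34: "C3 \<longleftrightarrow> C4"
  proof
    assume C3
    then have "rdiv a a \<in> Idp le mult" "ldiv a a \<in> Idp le mult" for a
      unfolding C3_def by auto
    then show C4 unfolding C4_def is_partition_family_def sub_A_def A_sub_def
      by auto
  next
    assume C4
    then have "rdiv a a \<in> Idp le mult" "ldiv a a \<in> Idp le mult" for a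
      unfolding C4_def is_partition_family_def sub_A_def A_sub_def by blast+
    then show C3 unfolding C3_def using sub by blast
  qed
  show ?thesis using 12 23 34 by blast
qed

end
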